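(* Let $(\varphi_\alpha)_{\alpha>0}$ be a non-linear regularizing filter satisfying Assumption B. Let $z\in\operatorname{ran}(\mathbf{M}_\kappa)\cap\operatorname{ran}(\Phi_{\tilde\alpha,\kappa})$ for some $\tilde\alpha>0$. Let $\delta_k\to0$, $\alpha_k\to0$ be positive sequences for which there is a constant $C>0$ with $\delta_k^2\le C\alpha_k$ for all $k$, and let $z^k\in\ell^2(\Lambda)$ with $\|z-z^k\|_2\le\delta_k$. Then $\mathbf{M}_\kappa^+\circ\Phi_{\alpha_k,\kappa}(z^k)\rightharpoonup\mathbf{M}_\kappa^+z$ weakly as $k\to\infty$.
   Context: $\Lambda$ is an at most countable index set and $\kappa=(\kappa_\lambda)_{\lambda\in\Lambda}\in(0,\infty)^\Lambda$ with $\sup_\lambda\kappa_\lambda<\infty$. $\mathbf{M}_\kappa\colon\ell^2(\Lambda)\to\ell^2(\Lambda)$, $(x_\lambda)\mapsto(\kappa_\lambda x_\lambda)$; $\mathbf{M}_\kappa^+$ is its Moore–Penrose inverse, with domain $\operatorname{ran}(\mathbf{M}_\kappa)=\{(c_\lambda)\in\ell^2:(c_\lambda/\kappa_\lambda)\in\ell^2\}$ and $\mathbf{M}_\kappa^+((c_\lambda))=(c_\lambda/\kappa_\lambda)$. A non-linear regularizing filter is a family $(\varphi_\alpha)_{\alpha>0}$ of functions $\varphi_\alpha\colon(0,\infty)\times\mathbb{R}\to\mathbb{R}$ such that for all $\alpha,\kappa>0$: (F1) $\varphi_\alpha(\kappa,\cdot)$ is non-decreasing; (F2) $\varphi_\alpha(\kappa,\cdot)$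 is 1-Lipschitz; (F3) $\varphi_\alpha(\kappa,0)=0$; (F4) $\lim_{\alpha\to0}\varphi_\alpha(\kappa,c)=c$ for all $c\in\mathbb{R}$. $\Phi_{\alpha,\kappa}\colon\ell^2(\Lambda)\to\ell^2(\Lambda)$, $(c_\lambda)\mapsto(\varphi_\alpha(\kappa_\lambda,c_\lambda))_\lambda$. Assumption B: (B1) for all $\kappa>0$ and $x\in\mathbb{R}$, $(|\varphi_\alpha(\kappa,x)|)_{\alpha>0}$ is monotonically increasing as $\alpha\downarrow0$; (B2) there exist $d,e>0$ such that for all $\kappa,\alpha>0$, $x\in\mathbb{R}$: $|x|\le d\alpha/\kappa\Rightarrow|\varphi_\alpha(\kappa,x)|\le\frac{e\kappa}{\sqrt\alpha}|x|$. *)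

theory Defs
  imports "HOL-Analysis.Analysis"
begin

definition l2 :: "('a \<Rightarrow> real) set" where
  "l2 = {x. (\<lambda>l. (x l)\<^sup>2) summable_on UNIV}"

definition l2_inner :: "('a \<Rightarrow> real) \<Rightarrow> ('a \<Rightarrow> real) \<Rightarrow> real" where
  "l2_inner x y = (\<Sum>\<^sub>\<infinity>l. x l * y l)"

definition l2_norm :: "('a \<Rightarrow> real) \<Rightarrow> real" where
  "l2_norm x = sqrt (\<Sum>\<^sub>\<infinity>l. (x l)\<^sup>2)"

definition weak_conv_l2 :: "(nat \<Rightarrow> 'a \<Rightarrow> real) \<Rightarrow> ('a \<Rightarrow> real) \<Rightarrow> bool" where
  "weak_conv_l2 xs x \<longleftrightarrow>
     (\<forall>y\<in>l2. (\<lambda>k. l2_inner (xs k) y) \<longlonglongrightarrow> l2_inner x y)"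

text \<open>Diagonal operator M_kappa and its range; Moore-Penrose inverse on its range.\<close>
definition M_op :: "('a \<Rightarrow> real) \<Rightarrow> ('a \<Rightarrow> real) \<Rightarrow> ('a \<Rightarrow> real)" where
  "M_op \<kappa> x = (\<lambda>l. \<kappa> l * x l)"

definition M_pinv :: "('a \<Rightarrow> real) \<Rightarrow> ('a \<Rightarrow> real) \<Rightarrow> ('a \<Rightarrow> real)" where
  "M_pinv \<kappa> c = (\<lambda>l. c l / \<kappa> l)"

definition Phi_op :: "(real \<Rightarrow> real \<Rightarrow> real \<Rightarrow> real) \<Rightarrow> real \<Rightarrow> ('a \<Rightarrow> real)
     \<Rightarrow> ('a \<Rightarrow> real) \<Rightarrow> ('a \<Rightarrow> real)" where
  "Phi_op \<phi> \<alpha> \<kappa> c = (\<lambda>l. \<phi> \<alpha> (\<kappa> l) (c l))"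

definition nonlinear_reg_filter :: "(real \<Rightarrow> real \<Rightarrow> real \<Rightarrow> real) \<Rightarrow> bool" where
  "nonlinear_reg_filter \<phi> \<longleftrightarrow>
     (\<forall>\<alpha>>0. \<forall>\<kappa>>0.
        mono (\<phi> \<alpha> \<kappa>) \<and>
        (\<forall>x y. \<bar>\<phi> \<alpha> \<kappa> x - \<phi> \<alpha> \<kappa> y\<bar> \<le> \<bar>x - y\<bar>) \<and>
        \<phi> \<alpha> \<kappa> 0 = 0) \<and>
     (\<forall>\<kappa>>0. \<forall>c. ((\<lambda>\<alpha>. \<phi> \<alpha> \<kappa> c) \<longlongrightarrow> c) (at_right 0))"

definition assumption_B :: "(real \<Rightarrow> real \<Rightarrow> real \<Rightarrow> real) \<Rightarrow> bool" where
  "assumption_B \<phi> \<longleftrightarrow>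
     (\<forall>\<kappa>>0. \<forall>x. \<forall>\<alpha> \<beta>. 0 < \<alpha> \<and> \<alpha> \<le> \<beta> \<longrightarrow> \<bar>\<phi> \<beta> \<kappa> x\<bar> \<le> \<bar>\<phi> \<alpha> \<kappa> x\<bar>) \<and>
     (\<exists>d>0. \<exists>e>0. \<forall>\<kappa>>0. \<forall>\<alpha>>0. \<forall>x.
        \<bar>x\<bar> \<le> d * \<alpha> / \<kappa> \<longrightarrow> \<bar>\<phi> \<alpha> \<kappa> x\<bar> \<le> e * \<kappa> / sqrt \<alpha> * \<bar>x\<bar>)"

end

theory Submission
  imports Defs
begin

lemma real_summable_cmp:
  fixes f g :: "'a \<Rightarrow> real"
  assumes "g summable_on A" "\<And>x. x \<in> A \<Longrightarrow> \<bar>f x\<bar> \<le> g x"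
  shows "f summable_on A"
proof -
  have "(\<lambda>x. norm (g x)) summable_on A" using assms(1) summable_on_iff_abs_summable_on_real[THEN iffD1] by blast
  hence "(\<lambda>x. norm (f x)) summable_on A"
    by (rule Infinite_Sum.abs_summable_on_comparison_test) (use assms(2) in fastforce)
  thus ?thesis using summable_on_iff_abs_summable_on_real[THEN iffD2] by blast
qed

lemma amgm_t:
  fixes a b t :: real assumes "t > 0"
  shows "\<bar>a * b\<bar> \<le> t/2 * a\<^sup>2 + b\<^sup>2 / (2*t)"
proof -
  have "0 \<le> (t*\<bar>a\<bar> - \<bar>b\<bar>)\<^sup>2" by simp
  hence "2*t*\<bar>a*b\<bar> \<le> t\<^sup>2*a\<^sup>2 + b\<^sup>2" by (simp add: power2_eq_square algebra_simps abs_mult)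
  hence "\<bar>a*b\<bar> \<le> (t\<^sup>2*a\<^sup>2 + b\<^sup>2) / (2*t)" using assms by (simp add: field_simps)
  also have "\<dots> = t/2 * a\<^sup>2 + b\<^sup>2 / (2*t)" using assms by (simp add: field_simps power2_eq_square)
  finally show ?thesis .
qed

lemma prod_summable:
  fixes u v :: "'a \<Rightarrow> real"
  assumes "(\<lambda>l. (u l)\<^sup>2) summable_on UNIV" "(\<lambda>l. (v l)\<^sup>2) summable_on UNIV"
  shows "(\<lambda>l. u l * v l) summable_on UNIV"
proof (rule real_summable_cmp)
  show "(\<lambda>l. (u l)\<^sup>2 + (v l)\<^sup>2) summable_on UNIV" using assms summable_on_add by blast
  fix l show "\<bar>u l * v l\<bar> \<le> (u l)\<^sup>2 + (v l)\<^sup>2"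
    using amgm_t[of 1 "u l" "v l"] by (simp add: power2_eq_square)
qed

lemma diff_sq_summable:
  fixes u v :: "'a \<Rightarrow> real"
  assumes "(\<lambda>l. (u l)\<^sup>2) summable_on UNIV" "(\<lambda>l. (v l)\<^sup>2) summable_on UNIV"
  shows "(\<lambda>l. (u l - v l)\<^sup>2) summable_on UNIV"
    and "(\<Sum>\<^sub>\<infinity>l. (u l - v l)\<^sup>2) \<le> 2 * (\<Sum>\<^sub>\<infinity>l. (u l)\<^sup>2) + 2 * (\<Sum>\<^sub>\<infinity>l. (v l)\<^sup>2)"
proof -
  have s: "(\<lambda>l. 2 * (u l)\<^sup>2 + 2 * (v l)\<^sup>2) summable_on UNIV"
    using assms summable_on_add summable_on_cmult_right by blast
  have le: "(u l - v l)\<^sup>2 \<le> 2 * (u l)\<^sup>2 + 2 * (v l)\<^sup>2" for l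
    using zero_le_square[of "u l + v l"] by (simp add: power2_eq_square algebra_simps)
  show s2: "(\<lambda>l. (u l - v l)\<^sup>2) summable_on UNIV"
    by (rule real_summable_cmp[OF s]) (use le in auto)
  have "(\<Sum>\<^sub>\<infinity>l. (u l - v l)\<^sup>2) \<le> (\<Sum>\<^sub>\<infinity>l. 2 * (u l)\<^sup>2 + 2 * (v l)\<^sup>2)"
    by (rule infsum_mono[OF s2 s]) (use le in auto)
  also have "\<dots> = 2 * (\<Sum>\<^sub>\<infinity>l. (u l)\<^sup>2) + 2 * (\<Sum>\<^sub>\<infinity>l. (v l)\<^sup>2)"
    using assms by (simp add: infsum_add summable_on_cmult_right infsum_cmult_right)
  finally show "(\<Sum>\<^sub>\<infinity>l. (u l - v l)\<^sup>2) \<le> 2 * (\<Sum>\<^sub>\<infinity>l. (u l)\<^sup>2) + 2 * (\<Sum>\<^sub>\<infinity>l. (v l)\<^sup>2)" .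
qed

lemma weak_lemma:
  fixes xs :: "nat \<Rightarrow> 'a \<Rightarrow> real" and x y :: "'a \<Rightarrow> real"
  assumes pw: "\<And>l. (\<lambda>k. xs k l) \<longlonglongrightarrow> x l"
    and xs_sum: "\<And>k. (\<lambda>l. (xs k l)\<^sup>2) summable_on UNIV"
    and xs_bd: "\<And>k. (\<Sum>\<^sub>\<infinity>l. (xs k l)\<^sup>2) \<le> B"
    and x_sum: "(\<lambda>l. (x l)\<^sup>2) summable_on UNIV"
    and y_sum: "(\<lambda>l. (y l)\<^sup>2) summable_on UNIV"
  shows "(\<lambda>k. \<Sum>\<^sub>\<infinity>l. xs k l * y l) \<longlonglongrightarrow> (\<Sum>\<^sub>\<infinity>l. x l * y l)"
proof (rule LIMSEQ_I)
  fix \<epsilon> :: real assume ep: "\<epsilon> > 0"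
  define D where "D = 2 * B + 2 * (\<Sum>\<^sub>\<infinity>l. (x l)\<^sup>2)"
  have dsum: "(\<lambda>l. (xs k l - x l)\<^sup>2) summable_on UNIV" for k
    using diff_sq_summable(1)[OF xs_sum x_sum] .
  have dbd: "(\<Sum>\<^sub>\<infinity>l. (xs k l - x l)\<^sup>2) \<le> D" for k
    using diff_sq_summable(2)[OF xs_sum[of k] x_sum] xs_bd[of k] unfolding D_def by linarith
  have D0: "D \<ge> 0" using dbd[of 0] infsum_nonneg[of UNIV "\<lambda>l. (xs 0 l - x l)\<^sup>2"] by simp
  define t where "t = \<epsilon> / (2 * (D + 1))"
  have t0: "t > 0" unfolding t_def using ep D0 by simp
  have tD: "t / 2 * D < \<epsilon> / 4" unfolding t_def using ep D0 by (simp add: field_simps)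
  obtain F where F: "finite F" "dist (sum (\<lambda>l. (y l)\<^sup>2) F) (\<Sum>\<^sub>\<infinity>l. (y l)\<^sup>2) \<le> t * \<epsilon> / 2"
    using infsum_finite_approximation[OF y_sum, of "t * \<epsilon> / 2"] t0 ep by auto
  define yT where "yT l = (if l \<in> F then 0 else y l)" for l
  define yF where "yF l = (if l \<in> F then y l else 0)" for l
  have yT_sum: "(\<lambda>l. (yT l)\<^sup>2) summable_on UNIV"
    by (rule real_summable_cmp[OF y_sum]) (auto simp: yT_def)
  have yF_sum: "(\<lambda>l. (yF l)\<^sup>2) summable_on UNIV"
    by (rule real_summable_cmp[OF y_sum]) (auto simp: yF_def)
  have yFinf: "(\<Sum>\<^sub>\<infinity>l. (yF l)\<^sup>2) = sum (\<lambda>l. (y l)\<^sup>2) F"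
  proof -
    have "(\<Sum>\<^sub>\<infinity>l. (yF l)\<^sup>2) = (\<Sum>\<^sub>\<infinity>l\<in>F. (y l)\<^sup>2)"
      by (rule infsum_cong_neutral) (auto simp: yF_def)
    thus ?thesis using F(1) by simp
  qed
  have "(\<Sum>\<^sub>\<infinity>l. (y l)\<^sup>2) = (\<Sum>\<^sub>\<infinity>l. (yF l)\<^sup>2 + (yT l)\<^sup>2)"
    by (rule infsum_cong) (auto simp: yF_def yT_def)
  also have "\<dots> = (\<Sum>\<^sub>\<infinity>l. (yF l)\<^sup>2) + (\<Sum>\<^sub>\<infinity>l. (yT l)\<^sup>2)"
    by (rule infsum_add[OF yF_sum yT_sum])
  finally have yTinf: "(\<Sum>\<^sub>\<infinity>l. (yT l)\<^sup>2) \<le> t * \<epsilon> / 2"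
    using F(2) yFinf by (simp add: dist_real_def)
  have fin_lim: "(\<lambda>k. \<Sum>l\<in>F. (xs k l - x l) * y l) \<longlonglongrightarrow> 0"
  proof -
    have "(\<lambda>k. \<Sum>l\<in>F. (xs k l - x l) * y l) \<longlonglongrightarrow> (\<Sum>l\<in>F. (x l - x l) * y l)"
      by (intro tendsto_sum tendsto_mult tendsto_diff pw tendsto_const)
    thus ?thesis by simp
  qed
  then obtain N where N: "\<And>k. k \<ge> N \<Longrightarrow> \<bar>\<Sum>l\<in>F. (xs k l - x l) * y l\<bar> < \<epsilon> / 2"
    using ep unfolding LIMSEQ_iff by (metis half_gt_zero real_norm_def diff_zero)
  show "\<exists>no. \<forall>n\<ge>no. norm ((\<Sum>\<^sub>\<infinity>l. xs n l * y l) - (\<Sum>\<^sub>\<infinity>l. x l * y l)) < \<epsilon>"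
  proof (intro exI allI impI)
    fix k assume k: "k \<ge> N"
    have s1: "(\<lambda>l. xs k l * y l) summable_on UNIV" using prod_summable[OF xs_sum y_sum] .
    have s2: "(\<lambda>l. x l * y l) summable_on UNIV" using prod_summable[OF x_sum y_sum] .
    have sF: "(\<lambda>l. (xs k l - x l) * yF l) summable_on UNIV" using prod_summable[OF dsum yF_sum] .
    have sT: "(\<lambda>l. (xs k l - x l) * yT l) summable_on UNIV" using prod_summable[OF dsum yT_sum] .
    have "(\<Sum>\<^sub>\<infinity>l. xs k l * y l) - (\<Sum>\<^sub>\<infinity>l. x l * y l)
        = (\<Sum>\<^sub>\<infinity>l. xs k l * y l + (- (x l * y l)))"
      using infsum_add[OF s1 summable_on_uminus[THEN iffD2, OF s2]] infsum_uminus[of "\<lambda>l. x l * y l" UNIV] by simp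
    also have "\<dots> = (\<Sum>\<^sub>\<infinity>l. (xs k l - x l) * yF l + (xs k l - x l) * yT l)"
      by (rule infsum_cong) (auto simp: yF_def yT_def algebra_simps)
    also have "\<dots> = (\<Sum>\<^sub>\<infinity>l. (xs k l - x l) * yF l) + (\<Sum>\<^sub>\<infinity>l. (xs k l - x l) * yT l)"
      by (rule infsum_add[OF sF sT])
    also have "(\<Sum>\<^sub>\<infinity>l. (xs k l - x l) * yF l) = (\<Sum>l\<in>F. (xs k l - x l) * y l)"
    proof -
      have "(\<Sum>\<^sub>\<infinity>l. (xs k l - x l) * yF l) = (\<Sum>\<^sub>\<infinity>l\<in>F. (xs k l - x l) * y l)"
        by (rule infsum_cong_neutral) (auto simp: yF_def)
      thus ?thesis using F(1) by simp
    qed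
    finally have eq: "(\<Sum>\<^sub>\<infinity>l. xs k l * y l) - (\<Sum>\<^sub>\<infinity>l. x l * y l)
       = (\<Sum>l\<in>F. (xs k l - x l) * y l) + (\<Sum>\<^sub>\<infinity>l. (xs k l - x l) * yT l)" .
    have sY: "(\<lambda>l. (yT l)\<^sup>2 / (2*t)) summable_on UNIV"
      using summable_on_cmult_left[OF yT_sum, of "1/(2*t)"] by simp
    have sA: "(\<lambda>l. t/2 * (xs k l - x l)\<^sup>2 + (yT l)\<^sup>2 / (2*t)) summable_on UNIV"
      by (rule summable_on_add[OF summable_on_cmult_right[OF dsum] sY])
    have iY: "(\<Sum>\<^sub>\<infinity>l. (yT l)\<^sup>2 / (2*t)) = (\<Sum>\<^sub>\<infinity>l. (yT l)\<^sup>2) / (2*t)"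
      using infsum_cmult_left[OF yT_sum, of "1/(2*t)"] by simp
    have sAbs: "(\<lambda>l. \<bar>(xs k l - x l) * yT l\<bar>) summable_on UNIV"
      using summable_on_iff_abs_summable_on_real[of "\<lambda>l. (xs k l - x l) * yT l" UNIV] sT by simp
    have "\<bar>\<Sum>\<^sub>\<infinity>l. (xs k l - x l) * yT l\<bar> \<le> (\<Sum>\<^sub>\<infinity>l. \<bar>(xs k l - x l) * yT l\<bar>)"
      using norm_infsum_bound[of "\<lambda>l. (xs k l - x l) * yT l" UNIV] sAbs by simp
    also have "\<dots> \<le> (\<Sum>\<^sub>\<infinity>l. t/2 * (xs k l - x l)\<^sup>2 + (yT l)\<^sup>2 / (2*t))"
    proof (rule infsum_mono[OF _ sA])
      show "(\<lambda>l. \<bar>(xs k l - x l) * yT l\<bar>) summable_on UNIV"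
        by (rule sAbs)
      show "\<And>l. l \<in> UNIV \<Longrightarrow> \<bar>(xs k l - x l) * yT l\<bar> \<le> t/2 * (xs k l - x l)\<^sup>2 + (yT l)\<^sup>2 / (2*t)"
        using amgm_t[OF t0] by blast
    qed
    also have "\<dots> = t/2 * (\<Sum>\<^sub>\<infinity>l. (xs k l - x l)\<^sup>2) + (\<Sum>\<^sub>\<infinity>l. (yT l)\<^sup>2) / (2*t)"
      using infsum_add[OF summable_on_cmult_right[OF dsum] sY, of "t/2"]
        infsum_cmult_right[OF dsum, of "t/2"] iY
      by simp
    also have "\<dots> \<le> t/2 * D + (t * \<epsilon> / 2) / (2*t)"
      using dbd[of k] yTinf t0 by (intro add_mono mult_left_mono divide_right_mono) auto
    also have "\<dots> < \<epsilon> / 2"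
    proof -
      have "(t * \<epsilon> / 2) / (2*t) = \<epsilon> / 4" using t0 by (simp add: field_simps)
      thus ?thesis using tD by linarith
    qed
    finally have "\<bar>\<Sum>\<^sub>\<infinity>l. (xs k l - x l) * yT l\<bar> < \<epsilon> / 2" .
    with N[OF k] eq show "norm ((\<Sum>\<^sub>\<infinity>l. xs k l * y l) - (\<Sum>\<^sub>\<infinity>l. x l * y l)) < \<epsilon>" by simp
  qed
qed

lemma filt_bound_g:
  fixes f :: "real \<Rightarrow> real"
  assumes lip: "\<forall>x y. \<bar>f x - f y\<bar> \<le> \<bar>x - y\<bar>" and f0: "f 0 = 0"
    and B2: "\<forall>x. \<bar>x\<bar> \<le> d * \<alpha> / \<kappa> \<longrightarrow> \<bar>f x\<bar> \<le> e * \<kappa> / sqrt \<alpha> * \<bar>x\<bar>"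
    and pos: "\<kappa> > 0" "\<alpha> > 0" "d > 0" "e > 0"
    and hd: "h\<^sup>2 \<le> \<delta>\<^sup>2" and g: "\<bar>g\<bar> = 2 * \<bar>h\<bar>"
  shows "(f g / \<kappa>)\<^sup>2 \<le> 4 * h\<^sup>2 * (e\<^sup>2/\<alpha> + 4*\<delta>\<^sup>2/(d\<^sup>2*\<alpha>\<^sup>2))"
proof -
  have "g\<^sup>2 = \<bar>g\<bar>\<^sup>2" by simp
  also have "\<dots> = (2 * \<bar>h\<bar>)\<^sup>2" using g by simp
  also have "\<dots> = 4 * h\<^sup>2" by (simp add: power_mult_distrib)
  finally have g2: "g\<^sup>2 = 4 * h\<^sup>2" .
  have fg: "\<bar>f g\<bar> \<le> \<bar>g\<bar>" using lip[rule_format, of g 0] f0 by simp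
  have K0: "0 \<le> 4*\<delta>\<^sup>2/(d\<^sup>2*\<alpha>\<^sup>2)" "0 \<le> e\<^sup>2/\<alpha>" using pos by auto
  show ?thesis
  proof (cases "\<bar>g\<bar> \<le> d * \<alpha> / \<kappa>")
    case True
    hence "\<bar>f g\<bar> \<le> e * \<kappa> / sqrt \<alpha> * \<bar>g\<bar>" using B2 by blast
    hence "\<bar>f g / \<kappa>\<bar> \<le> e / sqrt \<alpha> * \<bar>g\<bar>" using pos by (simp add: field_simps)
    hence "(f g / \<kappa>)\<^sup>2 \<le> (e / sqrt \<alpha> * \<bar>g\<bar>)\<^sup>2"
      by (metis abs_ge_zero power2_abs power_mono)
    also have "\<dots> = e\<^sup>2 / \<alpha> * g\<^sup>2" using pos by (simp add: power_mult_distrib power_divide)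
    also have "\<dots> = 4 * h\<^sup>2 * (e\<^sup>2/\<alpha>)" using g2 by simp
    also have "\<dots> \<le> 4 * h\<^sup>2 * (e\<^sup>2/\<alpha> + 4*\<delta>\<^sup>2/(d\<^sup>2*\<alpha>\<^sup>2))"
      using K0 by (intro mult_left_mono) auto
    finally show ?thesis .
  next
    case False
    hence "d * \<alpha> < \<kappa> * \<bar>g\<bar>" using pos by (simp add: field_simps)
    hence "(d * \<alpha>)\<^sup>2 < (\<kappa> * \<bar>g\<bar>)\<^sup>2" using pos by (intro power_strict_mono) auto
    hence lt: "1 / \<kappa>\<^sup>2 < g\<^sup>2 / (d\<^sup>2 * \<alpha>\<^sup>2)" using pos by (simp add: field_simps power_mult_distrib)
    have "(f g / \<kappa>)\<^sup>2 = (f g)\<^sup>2 * (1 / \<kappa>\<^sup>2)" by (simp add: power_divide)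
    also have "\<dots> \<le> g\<^sup>2 * (g\<^sup>2 / (d\<^sup>2 * \<alpha>\<^sup>2))"
      using fg lt by (intro mult_mono) (auto simp: abs_le_square_iff)
    also have "\<dots> = 4 * h\<^sup>2 * (4 * h\<^sup>2 / (d\<^sup>2 * \<alpha>\<^sup>2))" using g2 by simp
    also have "\<dots> \<le> 4 * h\<^sup>2 * (4 * \<delta>\<^sup>2 / (d\<^sup>2 * \<alpha>\<^sup>2))"
      using hd pos by (intro mult_left_mono divide_right_mono) auto
    also have "\<dots> \<le> 4 * h\<^sup>2 * (e\<^sup>2/\<alpha> + 4*\<delta>\<^sup>2/(d\<^sup>2*\<alpha>\<^sup>2))"
      using K0 by (intro mult_left_mono) auto
    finally show ?thesis .
  qed
qed

lemma aux_lin: "\<not> (X::real) \<le> 2 * a \<Longrightarrow> X \<le> a + b \<Longrightarrow> X < 2 * b"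
  by linarith

lemma filt_bound:
  fixes f :: "real \<Rightarrow> real"
  assumes mono: "mono f" and lip: "\<forall>x y. \<bar>f x - f y\<bar> \<le> \<bar>x - y\<bar>" and f0: "f 0 = 0"
    and B2: "\<forall>x. \<bar>x\<bar> \<le> d * \<alpha> / \<kappa> \<longrightarrow> \<bar>f x\<bar> \<le> e * \<kappa> / sqrt \<alpha> * \<bar>x\<bar>"
    and pos: "\<kappa> > 0" "\<alpha> > 0" "d > 0" "e > 0"
    and hd: "(x - y)\<^sup>2 \<le> \<delta>\<^sup>2"
  shows "(f x / \<kappa>)\<^sup>2 \<le> 8 * (x - y)\<^sup>2 * (e\<^sup>2/\<alpha> + 4*\<delta>\<^sup>2/(d\<^sup>2*\<alpha>\<^sup>2)) + 4 * (y / \<kappa>)\<^sup>2"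
proof -
  define h where "h = x - y"
  define K where "K = e\<^sup>2/\<alpha> + 4*\<delta>\<^sup>2/(d\<^sup>2*\<alpha>\<^sup>2)"
  have hd': "h\<^sup>2 \<le> \<delta>\<^sup>2" using hd h_def by simp
  have b1: "(f (2*\<bar>h\<bar>) / \<kappa>)\<^sup>2 \<le> 4 * h\<^sup>2 * K"
    unfolding K_def by (rule filt_bound_g[OF lip f0 B2 pos hd']) simp
  have b2: "(f (-(2*\<bar>h\<bar>)) / \<kappa>)\<^sup>2 \<le> 4 * h\<^sup>2 * K"
    unfolding K_def by (rule filt_bound_g[OF lip f0 B2 pos hd']) simp
  have y0: "0 \<le> 4 * (y / \<kappa>)\<^sup>2" by simp
  have hK0: "0 \<le> 4 * h\<^sup>2 * K" unfolding K_def using pos by auto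
  show ?thesis
  proof (cases "\<bar>x\<bar> \<le> 2*\<bar>h\<bar>")
    case True
    have lo: "f (-(2*\<bar>h\<bar>)) \<le> f x" using True by (intro monoD[OF mono]) auto
    have hi: "f x \<le> f (2*\<bar>h\<bar>)" using True by (intro monoD[OF mono]) auto
    have n1: "f (-(2*\<bar>h\<bar>)) \<le> 0" using monoD[OF mono, of "-(2*\<bar>h\<bar>)" 0] f0 by simp
    have n2: "0 \<le> f (2*\<bar>h\<bar>)" using monoD[OF mono, of 0 "2*\<bar>h\<bar>"] f0 by simp
    have "(f x)\<^sup>2 \<le> (f (2*\<bar>h\<bar>))\<^sup>2 + (f (-(2*\<bar>h\<bar>)))\<^sup>2"
    proof (cases "f x \<ge> 0")
      case True
      have "(f x)\<^sup>2 \<le> (f (2*\<bar>h\<bar>))\<^sup>2" using power_mono[OF hi True] by blast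
      thus ?thesis using zero_le_power2[of "f (-(2*\<bar>h\<bar>))"] by linarith
    next
      case False
      have a: "- f x \<le> - f (-(2*\<bar>h\<bar>))" using lo by simp
      have b: "0 \<le> - f x" using False by simp
      have "(- f x)\<^sup>2 \<le> (- f (-(2*\<bar>h\<bar>)))\<^sup>2" using power_mono[OF a b] by blast
      hence c: "(f x)\<^sup>2 \<le> (f (-(2*\<bar>h\<bar>)))\<^sup>2" by (simp only: power2_minus)
      show ?thesis using c zero_le_power2[of "f (2*\<bar>h\<bar>)"] by linarith
    qed
    hence "(f x)\<^sup>2 / \<kappa>\<^sup>2 \<le> ((f (2*\<bar>h\<bar>))\<^sup>2 + (f (-(2*\<bar>h\<bar>)))\<^sup>2) / \<kappa>\<^sup>2"
      by (rule divide_right_mono) simp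
    hence "(f x / \<kappa>)\<^sup>2 \<le> (f (2*\<bar>h\<bar>) / \<kappa>)\<^sup>2 + (f (-(2*\<bar>h\<bar>)) / \<kappa>)\<^sup>2"
      by (simp only: power_divide add_divide_distrib)
    also have "\<dots> \<le> 8 * h\<^sup>2 * K" using b1 b2 by simp
    finally show ?thesis using y0 unfolding h_def K_def by linarith
  next
    case False
    moreover have "\<bar>x\<bar> \<le> \<bar>x - y\<bar> + \<bar>y\<bar>" using abs_triangle_ineq[of "x-y" y] by simp
    ultimately have "\<bar>x\<bar> < 2 * \<bar>y\<bar>" unfolding h_def by (rule aux_lin)
    hence "\<bar>x\<bar> \<le> \<bar>2*y\<bar>" by (simp add: abs_mult)
    hence "x\<^sup>2 \<le> (2*y)\<^sup>2" by (simp only: abs_le_square_iff)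
    moreover have "(f x)\<^sup>2 \<le> x\<^sup>2" using lip[rule_format, of x 0] f0 by (simp add: abs_le_square_iff)
    ultimately have "(f x)\<^sup>2 \<le> 4 * y\<^sup>2" by (simp add: power_mult_distrib)
    hence "(f x)\<^sup>2 / \<kappa>\<^sup>2 \<le> (4 * y\<^sup>2) / \<kappa>\<^sup>2" by (rule divide_right_mono) simp
    hence "(f x / \<kappa>)\<^sup>2 \<le> 4 * (y / \<kappa>)\<^sup>2" by (simp add: power_divide)
    thus ?thesis using hK0 unfolding h_def K_def by linarith
  qed
qed


theorem proposition4p9:
  fixes \<phi> :: "real \<Rightarrow> real \<Rightarrow> real \<Rightarrow> real"
    and \<kappa> :: "'a::countable \<Rightarrow> real"
    and z :: "'a \<Rightarrow> real"
    and \<delta> \<alpha> :: "nat \<Rightarrow> real"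
    and zk :: "nat \<Rightarrow> 'a \<Rightarrow> real"
    and C :: real
  assumes filt: "nonlinear_reg_filter \<phi>"
    and B: "assumption_B \<phi>"
    and kpos: "\<forall>l. 0 < \<kappa> l"
    and kbdd: "bdd_above (range \<kappa>)"
    and z_l2: "z \<in> l2"
    and z_ranM: "z \<in> M_op \<kappa> ` l2"
    and z_ranPhi: "\<exists>\<alpha>t>0. z \<in> Phi_op \<phi> \<alpha>t \<kappa> ` l2"
    and \<delta>pos: "\<forall>k. 0 < \<delta> k" and \<delta>lim: "\<delta> \<longlonglongrightarrow> 0"
    and \<alpha>pos: "\<forall>k. 0 < \<alpha> k" and \<alpha>lim: "\<alpha> \<longlonglongrightarrow> 0"
    and Cpos: "C > 0"
    and \<delta>\<alpha>: "\<forall>k. (\<delta> k)\<^sup>2 \<le> C * \<alpha> k"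
    and zk_l2: "\<forall>k. zk k \<in> l2"
    and zk_close: "\<forall>k. l2_norm (\<lambda>l. z l - zk k l) \<le> \<delta> k"
  shows "(\<forall>k. Phi_op \<phi> (\<alpha> k) \<kappa> (zk k) \<in> M_op \<kappa> ` l2) \<and>
         weak_conv_l2 (\<lambda>k. M_pinv \<kappa> (Phi_op \<phi> (\<alpha> k) \<kappa> (zk k))) (M_pinv \<kappa> z)"
proof -
  have F1: "\<And>a c. a > 0 \<Longrightarrow> c > 0 \<Longrightarrow> mono (\<phi> a c)"
    and F2: "\<And>a c. a > 0 \<Longrightarrow> c > 0 \<Longrightarrow> \<forall>x y. \<bar>\<phi> a c x - \<phi> a c y\<bar> \<le> \<bar>x - y\<bar>"
    and F3: "\<And>a c. a > 0 \<Longrightarrow> c > 0 \<Longrightarrow> \<phi> a c 0 = 0"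
    and F4: "\<And>c x. c > 0 \<Longrightarrow> ((\<lambda>a. \<phi> a c x) \<longlongrightarrow> x) (at_right 0)"
    using filt unfolding nonlinear_reg_filter_def by auto
  have "\<exists>d>0. \<exists>e>0. \<forall>c>0. \<forall>a>0. \<forall>x. \<bar>x\<bar> \<le> d * a / c \<longrightarrow> \<bar>\<phi> a c x\<bar> \<le> e * c / sqrt a * \<bar>x\<bar>"
    using B unfolding assumption_B_def by (rule conjunct2)
  then obtain d e where de: "d > 0" "e > 0"
    and B2': "\<forall>c>0. \<forall>a>0. \<forall>x. \<bar>x\<bar> \<le> d * a / c \<longrightarrow> \<bar>\<phi> a c x\<bar> \<le> e * c / sqrt a * \<bar>x\<bar>"
    by blast
  have B2: "\<And>c a. c > 0 \<Longrightarrow> a > 0 \<Longrightarrow> \<forall>x. \<bar>x\<bar> \<le> d * a / c \<longrightarrow> \<bar>\<phi> a c x\<bar> \<le> e * c / sqrt a * \<bar>x\<bar>"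
    using B2' by blast
  obtain v where v: "v \<in> l2" "z = M_op \<kappa> v" using z_ranM by blast
  have zv: "z l / \<kappa> l = v l" for l using v(2) kpos[rule_format, of l] by (simp add: M_op_def)
  have vsum: "(\<lambda>l. (v l)\<^sup>2) summable_on UNIV" using v(1) by (simp add: l2_def)
  have zsum: "(\<lambda>l. (z l)\<^sup>2) summable_on UNIV" using z_l2 by (simp add: l2_def)
  have zksum: "(\<lambda>l. (zk k l)\<^sup>2) summable_on UNIV" for k using zk_l2 by (simp add: l2_def)
  have hsum: "(\<lambda>l. (zk k l - z l)\<^sup>2) summable_on UNIV" for k
    using diff_sq_summable(1)[OF zksum zsum] .
  have hbd: "(\<Sum>\<^sub>\<infinity>l. (zk k l - z l)\<^sup>2) \<le> (\<delta> k)\<^sup>2" for k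
  proof -
    have eq: "(\<Sum>\<^sub>\<infinity>l. (z l - zk k l)\<^sup>2) = (\<Sum>\<^sub>\<infinity>l. (zk k l - z l)\<^sup>2)"
      by (simp add: power2_commute)
    have nn: "0 \<le> (\<Sum>\<^sub>\<infinity>l. (zk k l - z l)\<^sup>2)" by (rule infsum_nonneg) simp
    have "sqrt (\<Sum>\<^sub>\<infinity>l. (zk k l - z l)\<^sup>2) \<le> \<delta> k"
      using zk_close[rule_format, of k] eq unfolding l2_norm_def by simp
    hence "(sqrt (\<Sum>\<^sub>\<infinity>l. (zk k l - z l)\<^sup>2))\<^sup>2 \<le> (\<delta> k)\<^sup>2"
      using power_mono[of "sqrt (\<Sum>\<^sub>\<infinity>l. (zk k l - z l)\<^sup>2)" "\<delta> k" 2] nn by simp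
    thus ?thesis using nn by simp
  qed
  have hpt: "(zk k l - z l)\<^sup>2 \<le> (\<delta> k)\<^sup>2" for k l
  proof -
    have "sum (\<lambda>l. (zk k l - z l)\<^sup>2) {l} \<le> (\<Sum>\<^sub>\<infinity>l. (zk k l - z l)\<^sup>2)"
      by (rule finite_sum_le_infsum[OF hsum]) auto
    thus ?thesis using hbd[of k] by simp
  qed
  define xs where "xs k l = \<phi> (\<alpha> k) (\<kappa> l) (zk k l) / \<kappa> l" for k l
  define K where "K k = (e\<^sup>2/\<alpha> k + 4*(\<delta> k)\<^sup>2/(d\<^sup>2*(\<alpha> k)\<^sup>2))" for k
  have xs_eq: "M_pinv \<kappa> (Phi_op \<phi> (\<alpha> k) \<kappa> (zk k)) = xs k" for k
    by (auto simp: M_pinv_def Phi_op_def xs_def)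
  have termbd: "(xs k l)\<^sup>2 \<le> 8 * (zk k l - z l)\<^sup>2 * K k + 4 * (v l)\<^sup>2" for k l
  proof -
    have ak: "\<alpha> k > 0" using \<alpha>pos by blast
    have kl: "\<kappa> l > 0" using kpos by blast
    have "(\<phi> (\<alpha> k) (\<kappa> l) (zk k l) / \<kappa> l)\<^sup>2
        \<le> 8 * (zk k l - z l)\<^sup>2 * (e\<^sup>2/\<alpha> k + 4*(\<delta> k)\<^sup>2/(d\<^sup>2*(\<alpha> k)\<^sup>2)) + 4 * (z l / \<kappa> l)\<^sup>2"
      by (rule filt_bound[OF F1[OF ak kl] F2[OF ak kl] F3[OF ak kl] B2[OF kl ak] kl ak de hpt])
    thus ?thesis unfolding xs_def K_def zv .
  qed
  have gsum: "(\<lambda>l. 8 * (zk k l - z l)\<^sup>2 * K k + 4 * (v l)\<^sup>2) summable_on UNIV" for k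
  proof -
    have "(\<lambda>l. 8 * K k * (zk k l - z l)\<^sup>2 + 4 * (v l)\<^sup>2) summable_on UNIV"
      by (intro summable_on_add summable_on_cmult_right hsum vsum)
    thus ?thesis by (simp add: mult_ac)
  qed
  have xsum: "(\<lambda>l. (xs k l)\<^sup>2) summable_on UNIV" for k
    by (rule real_summable_cmp[OF gsum]) (use termbd in simp)
  define S where "S = (\<Sum>\<^sub>\<infinity>l. (v l)\<^sup>2)"
  define Bd where "Bd = 8 * (e\<^sup>2 * C + 4 * C\<^sup>2 / d\<^sup>2) + 4 * S"
  have xbd: "(\<Sum>\<^sub>\<infinity>l. (xs k l)\<^sup>2) \<le> Bd" for k
  proof -
    have ak: "\<alpha> k > 0" using \<alpha>pos by blast
    have K0: "K k \<ge> 0" unfolding K_def using ak by auto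
    have "(\<Sum>\<^sub>\<infinity>l. (xs k l)\<^sup>2) \<le> (\<Sum>\<^sub>\<infinity>l. 8 * K k * (zk k l - z l)\<^sup>2 + 4 * (v l)\<^sup>2)"
    proof (rule infsum_mono[OF xsum])
      show "(\<lambda>l. 8 * K k * (zk k l - z l)\<^sup>2 + 4 * (v l)\<^sup>2) summable_on UNIV"
        by (intro summable_on_add summable_on_cmult_right hsum vsum)
      fix l
      have "8 * (zk k l - z l)\<^sup>2 * K k = 8 * K k * (zk k l - z l)\<^sup>2" by simp
      thus "(xs k l)\<^sup>2 \<le> 8 * K k * (zk k l - z l)\<^sup>2 + 4 * (v l)\<^sup>2" using termbd[of k l] by linarith
    qed
    also have "\<dots> = 8 * K k * (\<Sum>\<^sub>\<infinity>l. (zk k l - z l)\<^sup>2) + 4 * S"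
      unfolding S_def
      by (simp add: infsum_add summable_on_cmult_right hsum vsum infsum_cmult_right)
    also have "\<dots> \<le> 8 * K k * (\<delta> k)\<^sup>2 + 4 * S"
      using hbd[of k] K0 by (intro add_right_mono mult_left_mono) auto
    also have "8 * K k * (\<delta> k)\<^sup>2 \<le> 8 * (e\<^sup>2 * C + 4 * C\<^sup>2 / d\<^sup>2)"
    proof -
      have d2: "(\<delta> k)\<^sup>2 \<le> C * \<alpha> k" using \<delta>\<alpha> by blast
      have d0: "0 \<le> (\<delta> k)\<^sup>2" by simp
      have "K k * (\<delta> k)\<^sup>2 = e\<^sup>2 * ((\<delta> k)\<^sup>2 / \<alpha> k) + 4 / d\<^sup>2 * ((\<delta> k)\<^sup>2 / \<alpha> k)\<^sup>2"
        unfolding K_def using ak de by (simp add: field_simps power2_eq_square)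
      also have "\<dots> \<le> e\<^sup>2 * C + 4 / d\<^sup>2 * C\<^sup>2"
      proof -
        have q: "(\<delta> k)\<^sup>2 / \<alpha> k \<le> C" using d2 ak by (simp add: divide_le_eq mult.commute)
        have q0: "0 \<le> (\<delta> k)\<^sup>2 / \<alpha> k" using ak by simp
        have "((\<delta> k)\<^sup>2 / \<alpha> k)\<^sup>2 \<le> C\<^sup>2" by (rule power_mono[OF q q0])
        thus ?thesis using q de by (intro add_mono mult_left_mono) auto
      qed
      finally have r: "K k * (\<delta> k)\<^sup>2 \<le> e\<^sup>2 * C + 4 / d\<^sup>2 * C\<^sup>2" .
      have "4 / d\<^sup>2 * C\<^sup>2 = 4 * C\<^sup>2 / d\<^sup>2" by simp
      thus ?thesis using r by simp
    qed
    finally show ?thesis unfolding Bd_def by simp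
  qed
  have part1: "\<forall>k. Phi_op \<phi> (\<alpha> k) \<kappa> (zk k) \<in> M_op \<kappa> ` l2"
  proof
    fix k
    have "Phi_op \<phi> (\<alpha> k) \<kappa> (zk k) = M_op \<kappa> (xs k)"
    proof (rule ext)
      fix l have "\<kappa> l \<noteq> 0" using kpos by (metis less_irrefl)
      thus "Phi_op \<phi> (\<alpha> k) \<kappa> (zk k) l = M_op \<kappa> (xs k) l" by (simp add: M_op_def Phi_op_def xs_def)
    qed
    moreover have "xs k \<in> l2" using xsum by (simp add: l2_def)
    ultimately show "Phi_op \<phi> (\<alpha> k) \<kappa> (zk k) \<in> M_op \<kappa> ` l2" by blast
  qed
  have pw: "(\<lambda>k. xs k l) \<longlonglongrightarrow> v l" for l
  proof -
    have kl: "\<kappa> l > 0" using kpos by blast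
    have ar: "filterlim \<alpha> (at_right 0) sequentially"
      by (rule tendsto_imp_filterlim_at_right[OF \<alpha>lim]) (use \<alpha>pos in simp)
    have t1: "(\<lambda>k. \<phi> (\<alpha> k) (\<kappa> l) (z l)) \<longlonglongrightarrow> z l"
      using filterlim_compose[OF F4[OF kl, of "z l"] ar] .
    have t2: "(\<lambda>k. \<phi> (\<alpha> k) (\<kappa> l) (zk k l) - \<phi> (\<alpha> k) (\<kappa> l) (z l)) \<longlonglongrightarrow> 0"
    proof (rule Lim_null_comparison[OF _ \<delta>lim])
      show "\<forall>\<^sub>F k in sequentially. norm (\<phi> (\<alpha> k) (\<kappa> l) (zk k l) - \<phi> (\<alpha> k) (\<kappa> l) (z l)) \<le> \<delta> k"
      proof (rule always_eventually, rule allI)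
        fix k
        have ak: "\<alpha> k > 0" using \<alpha>pos by blast
        have "\<bar>zk k l - z l\<bar> \<le> \<bar>\<delta> k\<bar>" using hpt[of k l] by (simp only: abs_le_square_iff)
        moreover have "\<bar>\<delta> k\<bar> = \<delta> k" using \<delta>pos[rule_format, of k] by simp
        ultimately have "\<bar>zk k l - z l\<bar> \<le> \<delta> k" by simp
        thus "norm (\<phi> (\<alpha> k) (\<kappa> l) (zk k l) - \<phi> (\<alpha> k) (\<kappa> l) (z l)) \<le> \<delta> k"
          using F2[OF ak kl, rule_format, of "zk k l" "z l"] by simp
      qed
    qed
    have "(\<lambda>k. (\<phi> (\<alpha> k) (\<kappa> l) (zk k l) - \<phi> (\<alpha> k) (\<kappa> l) (z l)) + \<phi> (\<alpha> k) (\<kappa> l) (z l)) \<longlonglongrightarrow> 0 + z l"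
      by (rule tendsto_add[OF t2 t1])
    hence "(\<lambda>k. \<phi> (\<alpha> k) (\<kappa> l) (zk k l)) \<longlonglongrightarrow> z l" by simp
    hence "(\<lambda>k. \<phi> (\<alpha> k) (\<kappa> l) (zk k l) / \<kappa> l) \<longlonglongrightarrow> z l / \<kappa> l"
      by (rule tendsto_divide) (use kl in auto)
    thus ?thesis unfolding xs_def zv .
  qed
  have part2: "weak_conv_l2 (\<lambda>k. M_pinv \<kappa> (Phi_op \<phi> (\<alpha> k) \<kappa> (zk k))) (M_pinv \<kappa> z)"
    unfolding weak_conv_l2_def
  proof
    fix y :: "'a \<Rightarrow> real" assume y: "y \<in> l2"
    have ysum: "(\<lambda>l. (y l)\<^sup>2) summable_on UNIV" using y by (simp add: l2_def)
    have mz: "M_pinv \<kappa> z = v" using zv by (auto simp: M_pinv_def)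
    show "(\<lambda>k. l2_inner (M_pinv \<kappa> (Phi_op \<phi> (\<alpha> k) \<kappa> (zk k))) y) \<longlonglongrightarrow> l2_inner (M_pinv \<kappa> z) y"
      unfolding xs_eq mz l2_inner_def
      by (rule weak_lemma[OF pw xsum xbd vsum ysum])
  qed
  show ?thesis using part1 part2 by blast
qed

end
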